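(* A set $\mathcal{O}$ of upwards-closed modalities is decomposable if and only if for any $r\in TT\mathbf{1}$ and $o\in\mathcal{O}$ such that $\mu r\in o(\{*\})$, there is a collection of pairs $\{(o_i,\Phi_i)\}_{i\in I}$ with each $o_i\in\mathcal{O}$ and $\Phi_i\in\mathcal{T}$ such that: (1) for all $i\in I$, $r\in o_i([\![\Phi_i]\!])$; and (2) for all $r'\in TT\mathbf{1}$, if $r'\in o_i([\![\Phi_i]\!])$ for all $i\in I$, then $\mu r'\in o(\{*\})$.
   Context: $\Sigma$ is a signature of effect operations with arities $\alpha^n\to\alpha$, $\mathbf{N}\times\alpha^n\to\alpha$, $\alpha^{\mathbf{N}}\to\alpha$ or $\mathbf{N}\times\alpha^{\mathbf{N}}\to\alpha$. $TX$ is the set of possibly infinite labelled trees with leaves $\bot$ or elements of $X$ and internal nodes labelled by operations (or $\sigma_m$, $m\in\mathbb{N}$) with children according to arity; $t\le t'$ iff $t$ is obtained from $t'$ by replacing subtrees with $\bot$. $\mu:TTX\to TX$ replaces each leaf of a tree of trees by that tree. $\mathbf{1}=\{*\}$. A set $\mathcal{O}$ of modalities is given with $[\![o]\!]\subseteq T\mathbf{1}$; upwards closed means $[\![o]\!]$ is upward closed under $\le$. $t[\in P]\in T\mathbf{1}$ replaces leaves in $P$ by $*$ and other $X$-leaves by $\bot$; $o(A)=\{t\in TX\mid t[\in A]\in[\![o]\!]\}$. $\mathcal{T}$ is the least class of formulas containing $o(\top),o(\bot)$ ($o\in\mathcal{O}$) closed under arbitrary $\bigvee,\bigwedge$, with $[\![o(\top)]\!]=o(\{*\})$,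 $[\![o(\bot)]\!]=o(\emptyset)$, unions/intersections. On $T\mathbf{1}$: $t\trianglelefteq t'$ iff $\forall\Phi\in\mathcal{T}$, $t\in[\![\Phi]\!]\Rightarrow t'\in[\![\Phi]\!]$. On $TT\mathbf{1}$: $r\preccurlyeq r'$ iff $\forall o\,\forall\Phi\in\mathcal{T}$, $r\in o([\![\Phi]\!])\Rightarrow r'\in o([\![\Phi]\!])$. $\mathcal{O}$ is decomposable if $r\preccurlyeq r'$ implies $\mu r\trianglelefteq\mu r'$ for all $r,r'\in TT\mathbf{1}$. *)

theory Defs
  imports Main
begin

text \<open>Signature: node labels of type 'l with arity given by ar :: 'l => nat option.
  Some n: finitely many (n) children; None: countably many children (indexed by nat).
  Parametrised operations N x alpha^n -> alpha are represented by one label per parameter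
  value (sigma_m), as in the paper.\<close>

codatatype ('l, 'x) tree = Bot | Leaf 'x | Node 'l "nat \<Rightarrow> ('l, 'x) tree"

coinductive wfT :: "('l \<Rightarrow> nat option) \<Rightarrow> 'x set \<Rightarrow> ('l, 'x) tree \<Rightarrow> bool"
  for ar X where
  wf_Bot: "wfT ar X Bot"
| wf_Leaf: "x \<in> X \<Longrightarrow> wfT ar X (Leaf x)"
| wf_Node: "(\<forall>n i. ar l = Some n \<longrightarrow> n \<le> i \<longrightarrow> f i = Bot) \<Longrightarrow> (\<forall>i. wfT ar X (f i))
            \<Longrightarrow> wfT ar X (Node l f)"

definition TT :: "('l \<Rightarrow> nat option) \<Rightarrow> 'x set \<Rightarrow> ('l, 'x) tree set" where
  "TT ar X = {t. wfT ar X t}"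

abbreviation T1 :: "('l \<Rightarrow> nat option) \<Rightarrow> ('l, unit) tree set" where
  "T1 ar \<equiv> TT ar UNIV"

coinductive tle :: "('l, 'x) tree \<Rightarrow> ('l, 'x) tree \<Rightarrow> bool" where
  tle_Bot: "tle Bot t"
| tle_Leaf: "tle (Leaf x) (Leaf x)"
| tle_Node: "(\<forall>i. tle (f i) (g i)) \<Longrightarrow> tle (Node l f) (Node l g)"

primcorec mu :: "('l, ('l, 'x) tree) tree \<Rightarrow> ('l, 'x) tree" where
  "mu r = (case r of
      Bot \<Rightarrow> Bot
    | Leaf t \<Rightarrow> (case t of Bot \<Rightarrow> Bot | Leaf x \<Rightarrow> Leaf x | Node l g \<Rightarrow> Node l g)
    | Node l f \<Rightarrow> Node l (\<lambda>i. mu (f i)))"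

primcorec restr :: "'x set \<Rightarrow> ('l, 'x) tree \<Rightarrow> ('l, unit) tree" where
  "restr P t = (case t of
      Bot \<Rightarrow> Bot
    | Leaf x \<Rightarrow> (if x \<in> P then Leaf () else Bot)
    | Node l f \<Rightarrow> Node l (\<lambda>i. restr P (f i)))"

text \<open>o(A) = {t in TX | t[\<in>A] \<in> [[o]]}, with sem m = [[o]].\<close>
definition modal :: "('l \<Rightarrow> nat option) \<Rightarrow> 'x set \<Rightarrow> ('m \<Rightarrow> ('l, unit) tree set) \<Rightarrow> 'm
                      \<Rightarrow> 'x set \<Rightarrow> ('l, 'x) tree set" where
  "modal ar X sem m A = {t \<in> TT ar X. restr A t \<in> sem m}"

text \<open>Denotations of the formulas in the class \<T> (least class containing o(top), o(bot)
  and closed under arbitrary disjunctions and conjunctions); conjunctions are interpreted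
  inside T1 (so the empty conjunction is T1).\<close>
inductive_set Tsem :: "('l \<Rightarrow> nat option) \<Rightarrow> 'm set \<Rightarrow> ('m \<Rightarrow> ('l, unit) tree set)
                       \<Rightarrow> ('l, unit) tree set set"
  for ar Os sem where
  T_top: "m \<in> Os \<Longrightarrow> modal ar UNIV sem m {()} \<in> Tsem ar Os sem"
| T_bot: "m \<in> Os \<Longrightarrow> modal ar UNIV sem m {} \<in> Tsem ar Os sem"
| T_Sup: "\<forall>P\<in>S. P \<in> Tsem ar Os sem \<Longrightarrow> \<Union>S \<in> Tsem ar Os sem"
| T_Inf: "\<forall>P\<in>S. P \<in> Tsem ar Os sem \<Longrightarrow> T1 ar \<inter> \<Inter>S \<in> Tsem ar Os sem"

definition upwards_closed :: "('l \<Rightarrow> nat option) \<Rightarrow> 'm set \<Rightarrow> ('m \<Rightarrow> ('l, unit) tree set) \<Rightarrow> bool" where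
  "upwards_closed ar Os sem \<longleftrightarrow>
     (\<forall>m\<in>Os. \<forall>t t'. t \<in> sem m \<longrightarrow> t' \<in> T1 ar \<longrightarrow> tle t t' \<longrightarrow> t' \<in> sem m)"

definition tri_le :: "('l \<Rightarrow> nat option) \<Rightarrow> 'm set \<Rightarrow> ('m \<Rightarrow> ('l, unit) tree set)
                      \<Rightarrow> ('l, unit) tree \<Rightarrow> ('l, unit) tree \<Rightarrow> bool" where
  "tri_le ar Os sem t t' \<longleftrightarrow> (\<forall>P \<in> Tsem ar Os sem. t \<in> P \<longrightarrow> t' \<in> P)"

definition curly_le :: "('l \<Rightarrow> nat option) \<Rightarrow> 'm set \<Rightarrow> ('m \<Rightarrow> ('l, unit) tree set)
                      \<Rightarrow> ('l, ('l, unit) tree) tree \<Rightarrow> ('l, ('l, unit) tree) tree \<Rightarrow> bool" where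
  "curly_le ar Os sem r r' \<longleftrightarrow> (\<forall>m\<in>Os. \<forall>P \<in> Tsem ar Os sem.
      r \<in> modal ar (T1 ar) sem m P \<longrightarrow> r' \<in> modal ar (T1 ar) sem m P)"

definition decomposable :: "('l \<Rightarrow> nat option) \<Rightarrow> 'm set \<Rightarrow> ('m \<Rightarrow> ('l, unit) tree set) \<Rightarrow> bool" where
  "decomposable ar Os sem \<longleftrightarrow>
     (\<forall>r \<in> TT ar (T1 ar). \<forall>r' \<in> TT ar (T1 ar).
        curly_le ar Os sem r r' \<longrightarrow> tri_le ar Os sem (mu r) (mu r'))"

end

theory Submission imports Defs begin

primcorec lmap :: "('x \<Rightarrow> 'y) \<Rightarrow> ('l, 'x) tree \<Rightarrow> ('l, 'y) tree" where
  "lmap g t = (case t of Bot \<Rightarrow> Bot | Leaf x \<Rightarrow> Leaf (g x)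
     | Node l f \<Rightarrow> Node l (\<lambda>i. lmap g (f i)))"

lemma lmap_simps[simp]: "lmap g Bot = Bot" "lmap g (Leaf x) = Leaf (g x)"
  "lmap g (Node l f) = Node l (\<lambda>i. lmap g (f i))"
  by (subst lmap.code; simp)+

lemma restr_simps[simp]: "restr P Bot = Bot" "restr P (Leaf x) = (if x \<in> P then Leaf () else Bot)"
  "restr P (Node l f) = Node l (\<lambda>i. restr P (f i))"
  by (subst restr.code; simp)+

lemma mu_simps[simp]: "mu Bot = Bot" "mu (Leaf t) = t"
  "mu (Node l f) = Node l (\<lambda>i. mu (f i))"
  by (subst mu.code; simp split: tree.split)+

lemma wf_restr: "wfT ar X t \<Longrightarrow> wfT ar UNIV (restr A t)"
proof (coinduction arbitrary: t rule: wfT.coinduct)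
  case (wfT t)
  then show ?case
  proof (cases rule: wfT.cases)
    case (wf_Node l f)
    then show ?thesis by (intro disjI2) (auto intro!: exI[of _ "\<lambda>i. restr A (f i)"])
  qed auto
qed

lemma wf_lmap: assumes g: "\<forall>x\<in>X. g x \<in> Y" shows "wfT ar X t \<Longrightarrow> wfT ar Y (lmap g t)"
proof (coinduction arbitrary: t rule: wfT.coinduct)
  case (wfT t)
  then show ?case
  proof (cases rule: wfT.cases)
    case (wf_Node l f)
    then show ?thesis by (intro disjI2) (auto intro!: exI[of _ "\<lambda>i. lmap g (f i)"])
  qed (use g in auto)
qed

lemma wf_mu: "wfT ar (TT ar X) r \<Longrightarrow> wfT ar X (mu r)"
proof (coinduction arbitrary: r rule: wfT.coinduct)
  case (wfT r)
  then show ?case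
  proof (cases rule: wfT.cases)
    case (wf_Leaf t)
    then have "wfT ar X t" by (simp add: TT_def)
    then show ?thesis using wf_Leaf by (cases rule: wfT.cases) auto
  qed auto
qed

lemma mu_lmap: "mu (lmap (restr {}) r) = restr {} (mu r)"
  by (coinduction arbitrary: r rule: tree.coinduct_strong)
     (auto simp: rel_fun_def split: tree.split)

lemma restr_restr_empty: "restr B (restr {} t) = restr {} t"
  by (coinduction arbitrary: t rule: tree.coinduct_strong)
     (auto simp: rel_fun_def split: tree.split)

lemma restr_lmap: "restr P (lmap g r) = restr (g -` P) r"
  by (coinduction arbitrary: r rule: tree.coinduct_strong)
     (auto simp: rel_fun_def split: tree.split)

lemma restr_inter: "wfT ar X r \<Longrightarrow> restr (A \<inter> X) r = restr A r"
  by (coinduction arbitrary: r rule: tree.coinduct_strong)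
     (auto simp: rel_fun_def elim!: wfT.cases)


definition Fpre :: "('l \<Rightarrow> nat option) \<Rightarrow> ('l, unit) tree set \<Rightarrow> ('l, unit) tree set" where
  "Fpre ar P = T1 ar \<inter> (restr {} -` P)"

lemma modal_bot_eq: "Fpre ar (modal ar UNIV sem m A) = modal ar UNIV sem m {}"
  by (auto simp: Fpre_def modal_def restr_restr_empty TT_def intro: wf_restr)

lemma Fpre_Tsem: "P \<in> Tsem ar Os sem \<Longrightarrow> Fpre ar P \<in> Tsem ar Os sem"
proof (induction rule: Tsem.induct)
  case (T_top m)
  then show ?case by (simp add: modal_bot_eq Tsem.T_bot)
next
  case (T_bot m)
  then show ?case by (simp add: modal_bot_eq Tsem.T_bot)
next
  case (T_Sup S)
  have "Fpre ar (\<Union>S) = \<Union>(Fpre ar ` S)" by (auto simp: Fpre_def)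
  then show ?case using T_Sup by (auto intro!: Tsem.T_Sup)
next
  case (T_Inf S)
  have "Fpre ar (T1 ar \<inter> \<Inter>S) = T1 ar \<inter> \<Inter>(Fpre ar ` S)"
    by (auto simp: Fpre_def TT_def intro: wf_restr)
  then show ?case using T_Inf by (auto intro!: Tsem.T_Inf)
qed

lemma lmap_T1: "r \<in> TT ar (T1 ar) \<Longrightarrow> lmap (restr {}) r \<in> TT ar (T1 ar)"
proof -
  assume "r \<in> TT ar (T1 ar)"
  then have "wfT ar (T1 ar) r" by (simp add: TT_def)
  moreover have "\<forall>x\<in>T1 ar. restr {} x \<in> T1 ar" by (simp add: TT_def wf_restr)
  ultimately have "wfT ar (T1 ar) (lmap (restr {}) r)" by (rule wf_lmap[rotated])
  then show ?thesis by (simp add: TT_def)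
qed

lemma modal_lmap:
  assumes "r \<in> TT ar (T1 ar)"
  shows "lmap (restr {}) r \<in> modal ar (T1 ar) sem m P \<longleftrightarrow> r \<in> modal ar (T1 ar) sem m (Fpre ar P)"
proof -
  have "restr P (lmap (restr {}) r) = restr (Fpre ar P) r"
    using assms restr_inter[of ar "T1 ar" r "restr {} -` P"]
    by (simp add: restr_lmap Fpre_def TT_def Int_commute)
  then show ?thesis using assms lmap_T1[OF assms] by (auto simp: modal_def)
qed

lemma mu_T1: "r \<in> TT ar (T1 ar) \<Longrightarrow> mu r \<in> T1 ar"
proof -
  assume "r \<in> TT ar (T1 ar)"
  then have "wfT ar (T1 ar) r" by (simp add: TT_def)
  then have "wfT ar UNIV (mu r)" by (rule wf_mu)
  then show ?thesis by (simp add: TT_def)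
qed

theorem lemma4p17:
  fixes ar :: "'l \<Rightarrow> nat option"
    and Os :: "'m set"
    and sem :: "'m \<Rightarrow> ('l, unit) tree set"
  assumes sem_T1: "\<forall>m\<in>Os. sem m \<subseteq> T1 ar"
    and up: "upwards_closed ar Os sem"
  shows "decomposable ar Os sem \<longleftrightarrow>
    (\<forall>r \<in> TT ar (T1 ar). \<forall>m \<in> Os. mu r \<in> modal ar UNIV sem m {()} \<longrightarrow>
       (\<exists>C :: ('m \<times> ('l, unit) tree set) set.
          (\<forall>(oi, P) \<in> C. oi \<in> Os \<and> P \<in> Tsem ar Os sem) \<and>
          (\<forall>(oi, P) \<in> C. r \<in> modal ar (T1 ar) sem oi P) \<and>
          (\<forall>r' \<in> TT ar (T1 ar). (\<forall>(oi, P) \<in> C. r' \<in> modal ar (T1 ar) sem oi P)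
              \<longrightarrow> mu r' \<in> modal ar UNIV sem m {()})))" (is "?L \<longleftrightarrow> ?R")
proof
  assume L: ?L
  show ?R
  proof (intro ballI impI)
    fix r m assume r: "r \<in> TT ar (T1 ar)" and m: "m \<in> Os" and mr: "mu r \<in> modal ar UNIV sem m {()}"
    let ?C = "{(oi, P). oi \<in> Os \<and> P \<in> Tsem ar Os sem \<and> r \<in> modal ar (T1 ar) sem oi P}"
    show "\<exists>C :: ('m \<times> ('l, unit) tree set) set.
          (\<forall>(oi, P) \<in> C. oi \<in> Os \<and> P \<in> Tsem ar Os sem) \<and>
          (\<forall>(oi, P) \<in> C. r \<in> modal ar (T1 ar) sem oi P) \<and>
          (\<forall>r' \<in> TT ar (T1 ar). (\<forall>(oi, P) \<in> C. r' \<in> modal ar (T1 ar) sem oi P)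
              \<longrightarrow> mu r' \<in> modal ar UNIV sem m {()})"
    proof (rule exI[of _ ?C], intro conjI)
      show "\<forall>(oi, P) \<in> ?C. oi \<in> Os \<and> P \<in> Tsem ar Os sem" by blast
      show "\<forall>(oi, P) \<in> ?C. r \<in> modal ar (T1 ar) sem oi P" by blast
      show "\<forall>r' \<in> TT ar (T1 ar). (\<forall>(oi, P) \<in> ?C. r' \<in> modal ar (T1 ar) sem oi P)
              \<longrightarrow> mu r' \<in> modal ar UNIV sem m {()}"
      proof (intro ballI impI)
      fix r' assume r': "r' \<in> TT ar (T1 ar)" and h: "\<forall>(oi, P) \<in> ?C. r' \<in> modal ar (T1 ar) sem oi P"
      have "curly_le ar Os sem r r'" using h by (auto simp: curly_le_def)
      then have "tri_le ar Os sem (mu r) (mu r')" using L r r' by (auto simp: decomposable_def)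
      then show "mu r' \<in> modal ar UNIV sem m {()}"
        using mr m Tsem.T_top[of m Os ar sem] by (auto simp: tri_le_def)
      qed
    qed
  qed
next
  assume R: ?R
  show ?L
    unfolding decomposable_def tri_le_def
  proof (intro ballI impI)
    fix r r' P
    assume r: "r \<in> TT ar (T1 ar)" and r': "r' \<in> TT ar (T1 ar)" and cl: "curly_le ar Os sem r r'"
      and P: "P \<in> Tsem ar Os sem"
    have top: "mu r' \<in> modal ar UNIV sem m {()}"
      if h1: "m \<in> Os" and h2: "mu r \<in> modal ar UNIV sem m {()}" and h3: "r \<in> TT ar (T1 ar)"
        and h4: "r' \<in> TT ar (T1 ar)" and h5: "curly_le ar Os sem r r'" for m r r'
    proof -
      obtain C :: "('m \<times> ('l, unit) tree set) set" where
        C1: "\<forall>(oi, P) \<in> C. oi \<in> Os \<and> P \<in> Tsem ar Os sem" and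
        C2: "\<forall>(oi, P) \<in> C. r \<in> modal ar (T1 ar) sem oi P" and
        C3: "\<forall>r' \<in> TT ar (T1 ar). (\<forall>(oi, P) \<in> C. r' \<in> modal ar (T1 ar) sem oi P)
              \<longrightarrow> mu r' \<in> modal ar UNIV sem m {()}"
        using R[rule_format, OF h3 h1 h2] by meson
      have "\<forall>(oi, P) \<in> C. r' \<in> modal ar (T1 ar) sem oi P"
      proof (intro ballI, clarify)
        fix oi P assume "(oi, P) \<in> C"
        then have "oi \<in> Os" "P \<in> Tsem ar Os sem" "r \<in> modal ar (T1 ar) sem oi P"
          using C1 C2 by auto
        then show "r' \<in> modal ar (T1 ar) sem oi P" using h5 unfolding curly_le_def by blast
      qed
      then show ?thesis using C3 h4 by blast
    qed
    assume mrP: "mu r \<in> P"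
    have "mu r \<in> P \<longrightarrow> mu r' \<in> P"
      using P
    proof (induction rule: Tsem.induct)
      case (T_top m)
      then show ?case using top[OF T_top _ r r' cl] by blast
    next
      case (T_bot m)
      show ?case
      proof
        assume "mu r \<in> modal ar UNIV sem m {}"
        let ?lr = "lmap (restr {}) r" and ?lr' = "lmap (restr {}) r'"
        have "mu ?lr \<in> modal ar UNIV sem m {()}"
        proof -
          have a: "wfT ar UNIV (mu r)" "restr {} (mu r) \<in> sem m"
            using \<open>mu r \<in> modal ar UNIV sem m {}\<close> by (auto simp: modal_def TT_def)
          have "wfT ar UNIV (restr {} (mu r))" using a(1) by (rule wf_restr)
          moreover have "restr {()} (restr {} (mu r)) = restr {} (mu r)" by (rule restr_restr_empty)
          ultimately have "restr {} (mu r) \<in> modal ar UNIV sem m {()}"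
            using a(2) unfolding modal_def TT_def by simp
          then show ?thesis by (subst mu_lmap)
        qed
        moreover have "curly_le ar Os sem ?lr ?lr'"
          unfolding curly_le_def
        proof (intro ballI impI)
          fix m' Q assume m': "m' \<in> Os" and Q: "Q \<in> Tsem ar Os sem"
            and lm: "?lr \<in> modal ar (T1 ar) sem m' Q"
          have rm: "r \<in> modal ar (T1 ar) sem m' (Fpre ar Q)"
            using modal_lmap[OF r, THEN iffD1, OF lm] .
          have FQ: "Fpre ar Q \<in> Tsem ar Os sem" using Q by (rule Fpre_Tsem)
          have "r' \<in> modal ar (T1 ar) sem m' (Fpre ar Q)"
            using cl[unfolded curly_le_def, rule_format, OF m' FQ rm] .
          then show "?lr' \<in> modal ar (T1 ar) sem m' Q"
            by (rule modal_lmap[OF r', THEN iffD2])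
        qed
        ultimately have "mu ?lr' \<in> modal ar UNIV sem m {()}"
          using top[OF T_bot _ lmap_T1[OF r] lmap_T1[OF r']] by blast
        then show "mu r' \<in> modal ar UNIV sem m {}"
          using mu_T1[OF r'] by (auto simp: mu_lmap modal_def restr_restr_empty)
      qed
    next
      case (T_Sup S)
      then show ?case by auto
    next
      case (T_Inf S)
      then show ?case using mu_T1[OF r'] by auto
    qed
    then show "mu r' \<in> P" using mrP by blast
  qed
qed

end
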